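(* Let $P:[0,\infty)\to[-\tfrac14,\infty)$ be defined by $P(r)=r-\frac{1}{4(r+1)}$. For any $a_0\ge0$, define $a_{n+1}=P(a_n)$ recursively (as long as $a_n\ge0$). Then there exists an integer $N_0$ such that $0\le a_{N_0}<1$ and $-\tfrac14\le a_{N_0+1}<0$. Conversely, for any $a\in[0,1)$ and any $b>a$, there exists a sequence $a_0,\dots,a_{N_0}$ defined by the recursion $a_{n+1}=P(a_n)$ such that $a_0>b$ and $a_{N_0}=a$. *)

theory Defs
  imports Complex_Main
begin

text \<open>The map P(r) = r - 1/(4(r+1)), intended on [0,\<infinity>); we define it on all reals
  and guard the domain by requiring all iterates used to be nonnegative.\<close>
definition P :: "real \<Rightarrow> real" where
  "P r = r - 1 / (4 * (r + 1))"

end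

theory Submission
  imports Defs
begin

lemma P_ge: "r \<ge> 0 \<Longrightarrow> P r \<ge> -1/4"
proof -
  assume r: "r \<ge> 0"
  have "1 / (4 * (r + 1)) \<le> 1/4" using r by (simp add: field_simps)
  thus ?thesis using r unfolding P_def by linarith
qed

lemma P_neg_lt1: "r \<ge> 0 \<Longrightarrow> P r < 0 \<Longrightarrow> r < 1"
proof (rule ccontr)
  assume r: "r \<ge> 0" "P r < 0" "\<not> r < 1"
  have "1 / (4 * (r + 1)) \<le> 1/4" using r by (simp add: field_simps)
  thus False using r unfolding P_def by linarith
qed

lemma P_dec: "0 \<le> r \<Longrightarrow> r \<le> A \<Longrightarrow> P r \<le> r - 1/(4*(A+1))"
proof -
  assume r: "0 \<le> r" "r \<le> A"
  have "1/(4*(A+1)) \<le> 1/(4*(r+1))" using r by (intro divide_left_mono) auto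
  thus ?thesis unfolding P_def by linarith
qed

lemma eventually_neg:
  assumes a0: "a0 \<ge> 0" shows "\<exists>n. (P ^^ n) a0 < 0"
proof (rule ccontr)
  assume "\<not> ?thesis"
  hence nn: "\<And>n. (P ^^ n) a0 \<ge> 0" by (simp add: not_less)
  have bnd: "(P ^^ n) a0 \<le> a0 - real n / (4*(a0+1))" for n
  proof (induction n)
    case 0 then show ?case by simp
  next
    case (Suc n)
    have le: "(P ^^ n) a0 \<le> a0" using Suc a0 by (smt (verit) divide_nonneg_nonneg of_nat_0_le_iff)
    have "(P ^^ Suc n) a0 = P ((P ^^ n) a0)" by simp
    also have "\<dots> \<le> (P ^^ n) a0 - 1/(4*(a0+1))" using P_dec[OF nn le] .
    also have "\<dots> \<le> a0 - real (Suc n) / (4*(a0+1))" using Suc by (simp add: add_divide_distrib)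
    finally show ?case .
  qed
  obtain n where "a0 < real n * (1/(4*(a0+1)))"
    using ex_less_of_nat_mult[of "1/(4*(a0+1))" a0] a0 by auto
  hence "a0 - real n / (4*(a0+1)) < 0" by simp
  with bnd[of n] nn[of n] show False by linarith
qed

lemma part1:
  assumes a0: "a0 \<ge> 0"
  shows "\<exists>N0::nat. (\<forall>n\<le>N0. (P ^^ n) a0 \<ge> 0) \<and> (P ^^ N0) a0 < 1 \<and>
           -1/4 \<le> (P ^^ Suc N0) a0 \<and> (P ^^ Suc N0) a0 < 0"
proof -
  define N where "N = (LEAST n. (P ^^ n) a0 < 0)"
  have N: "(P ^^ N) a0 < 0" unfolding N_def using eventually_neg[OF a0] by (rule LeastI_ex)
  have below: "\<And>n. n < N \<Longrightarrow> (P ^^ n) a0 \<ge> 0" unfolding N_def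
    using not_less_Least by (metis not_le_imp_less)
  have "N \<noteq> 0" using N a0 by (metis funpow_0 not_less)
  then obtain M where M: "N = Suc M" by (cases N) auto
  have all: "\<forall>n\<le>M. (P ^^ n) a0 \<ge> 0" using below M by auto
  hence r: "(P ^^ M) a0 \<ge> 0" by simp
  have eq: "(P ^^ Suc M) a0 = P ((P ^^ M) a0)" by simp
  show ?thesis
    apply (rule exI[of _ M])
    using all N M eq P_ge[OF r] P_neg_lt1[OF r] by auto
qed

lemma Q_ex: "y \<ge> 0 \<Longrightarrow> \<exists>x\<ge>0. x \<le> y+1 \<and> P x = y"
proof -
  assume y: "y \<ge> 0"
  have c: "continuous_on {0..y+1} P" unfolding P_def
    by (intro continuous_intros) auto
  have "P 0 \<le> y" using y by (simp add: P_def)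
  moreover have "y \<le> P (y+1)"
  proof -
    have "1/(4*(y+1+1)) \<le> 1" using y by (simp add: field_simps)
    thus ?thesis unfolding P_def by linarith
  qed
  ultimately show ?thesis using IVT'[of P 0 y "y+1"] c y by auto
qed

lemma part2_step:
  assumes a: "0 \<le> a" and ba: "b > a"
  shows "\<exists>a0 N0. (\<forall>n\<le>N0. (P ^^ n) a0 \<ge> 0) \<and> (P ^^ N0) a0 = a \<and>
           (a0 > b \<or> a0 \<ge> a + real k / (4*(b+5/4+1)))"
proof (induction k)
  case 0 show ?case by (rule exI[of _ a], rule exI[of _ 0]) (use a in auto)
next
  case (Suc k)
  then obtain a0 N0 where h: "\<forall>n\<le>N0. (P ^^ n) a0 \<ge> 0" "(P ^^ N0) a0 = a"
     "a0 > b \<or> a0 \<ge> a + real k / (4*(b+5/4+1))" by blast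
  show ?case
  proof (cases "a0 > b")
    case True thus ?thesis using h by blast
  next
    case False
    have a00: "a0 \<ge> 0" using h(1) by (metis funpow_0 le0)
    obtain x where x: "x \<ge> 0" "x \<le> a0+1" "P x = a0" using Q_ex[OF a00] by blast
    have xe: "x = a0 + 1/(4*(x+1))" using x(3) unfolding P_def by simp
    have "1/(4*(x+1)) \<le> 1/4" using x by (simp add: field_simps)
    hence xb: "x \<le> b + 5/4" using xe False by linarith
    have "1/(4*(b+5/4+1)) \<le> 1/(4*(x+1))" using xb x(1) by (intro divide_left_mono) auto
    hence "x \<ge> a0 + 1/(4*(b+5/4+1))" using xe by linarith
    moreover have "a0 \<ge> a + real k / (4*(b+5/4+1))" using h(3) False by auto
    ultimately have inc: "x \<ge> a + real (Suc k) / (4*(b+5/4+1))" by (simp add: add_divide_distrib)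
    have it: "(P ^^ Suc m) x = (P ^^ m) a0" for m by (simp only: funpow_Suc_right comp_def x(3))
    have nn: "\<forall>n\<le>Suc N0. (P ^^ n) x \<ge> 0"
    proof (intro allI impI)
      fix n assume "n \<le> Suc N0"
      thus "(P ^^ n) x \<ge> 0" using h(1) x(1) it by (cases n) auto
    qed
    show ?thesis using nn it[of N0] h(2) inc by blast
  qed
qed

theorem mainTheorem5:
  shows "(\<forall>a0::real. a0 \<ge> 0 \<longrightarrow>
            (\<exists>N0::nat. (\<forall>n\<le>N0. (P ^^ n) a0 \<ge> 0) \<and>
                        (P ^^ N0) a0 < 1 \<and>
                        -1/4 \<le> (P ^^ Suc N0) a0 \<and> (P ^^ Suc N0) a0 < 0))
       \<and> (\<forall>a b::real. 0 \<le> a \<and> a < 1 \<and> b > a \<longrightarrow>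
            (\<exists>a0 N0. a0 > b \<and> (\<forall>n\<le>N0. (P ^^ n) a0 \<ge> 0) \<and> (P ^^ N0) a0 = a))"
proof (intro conjI allI impI)
  fix a0 :: real assume "a0 \<ge> 0" thus "\<exists>N0::nat. (\<forall>n\<le>N0. (P ^^ n) a0 \<ge> 0) \<and>
                        (P ^^ N0) a0 < 1 \<and>
                        -1/4 \<le> (P ^^ Suc N0) a0 \<and> (P ^^ Suc N0) a0 < 0" by (rule part1)
next
  fix a b :: real assume h: "0 \<le> a \<and> a < 1 \<and> b > a"
  have cpos: "0 < 1/(4*(b+5/4+1))" using h by simp
  obtain k where k: "b - a < real k * (1/(4*(b+5/4+1)))"
    using ex_less_of_nat_mult[OF cpos] by blast
  obtain a0 N0 where r: "\<forall>n\<le>N0. (P ^^ n) a0 \<ge> 0" "(P ^^ N0) a0 = a"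
     "a0 > b \<or> a0 \<ge> a + real k / (4*(b+5/4+1))" using part2_step[of a b k] h by blast
  have "a0 > b" using r(3) k by auto
  thus "\<exists>a0 N0. a0 > b \<and> (\<forall>n\<le>N0. (P ^^ n) a0 \<ge> 0) \<and> (P ^^ N0) a0 = a" using r by blast
qed

end
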